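(* Under the setting below, for any $1\le j_1\le j_2\le H-1$, any trajectory $\tau_{j_1-1}$, any policy $\pi$, any $f\in\mathcal{F}$ and any $x\in\mathbb{R}^{|\mathcal{U}_{j_1}|}$, $$\sum_{\tau_{j_1:j_2}}\big\|M_{o_{j_2},a_{j_2},j_2;f}\cdots M_{o_{j_1},a_{j_1},j_1;f}\,x\big\|_1\,\pi(\tau_{j_1:j_2}\mid\tau_{j_1-1})\le\frac{|\mathcal{U}_A|}{\alpha}\|x\|_1,$$ where the sum is over $\tau_{j_1:j_2}=(o_{j_1},a_{j_1},\dots,o_{j_2},a_{j_2})$ and $\pi(\tau_{j_1:j_2}\mid\tau_{j_1-1})=\prod_{j=j_1}^{j_2}\pi_j(a_j\mid\tau_{j_1-1},o_{j_1},a_{j_1},\dots,o_j)$.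
   Context: Process: finite $\mathcal{O},\mathcal{A}$, horizon $H$; histories $\tau_h=(o_1,a_1,\dots,o_h,a_h)$; policies pick $a_h\sim\pi_h(\cdot\mid\tau_{h-1},o_h)$. For a model $f$: a test starting at step $h$ is $t=(o_h,\dots,o_{h+W-1},a_h,\dots,a_{h+W-2})$; $\mathbb{P}_f(t\mid\tau_{h-1})$ is the probability of observing $o_{h:h+W-1}$ when executing $a_{h:h+W-2}$ after $\tau_{h-1}$ ($0$ if unreachable). A set $\mathcal{U}_h$ of tests starting at $h$ is a core test set if for every test $t$ starting at $h$ there is a history-independent $m_{t,h;f}$ with $\mathbb{P}_f(t\mid\tau_{h-1})=\langle m_{t,h;f},q_{\tau_{h-1};f}\rangle$, $q_{\tau_{h-1};f}=[\mathbb{P}_f(u\mid\tau_{h-1})]_{u\in\mathcal{U}_h}$; $q_{0;f}=[\mathbb{P}_f(u)]_{u\in\mathcal{U}_1}$; $M_{o,a,h;f}$ has rows $m_{(o,a,u),h;f}^\top$, $u\in\mathcal{U}_{h+1}$. $\mathcal{U}_{A,h}$: action sequences in $\mathcal{U}_h$; $|\mathcal{U}_A|=\max_h|\mathcal{U}_{A,h}|$. $d_{\mathrm{PSR},h;f}$ is the rank of the matrix with entries $\mathbb{P}_f(t\mid\tau_h)$. Core matrix $K_{h;f}$ ($h\ge1$): columns $q_{\tau_h^1;f},\dots,q_{\tau_h^{d_{\mathrm{PSR},h;f}};f}$ for histories whose predictive states span all $q_{\tau_h;f}$, chosen to minimize $\|K_{h;f}^\dagger\|_{1\to1}$; $K_{0;f}=q_{0;f}$.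 Standing assumptions: $\mathcal{F}$ is a model class each of whose members is a valid PSR with core test sets $\{\mathcal{U}_h\}_{h\in[H]}$ and $\|K_{h;f}^\dagger\|_{1\to1}\le1/\alpha$ for $h\in\{0,\dots,H-1\}$; every $o\in\mathcal{O}$ belongs to $\mathcal{U}_H$. Convention: for every $f\in\mathcal{F}$ the vectors $m_{(o,a,u),h;f}$ are chosen in the column space of $K_{h-1;f}$ (such a choice exists and leaves the trajectory distributions unchanged). *)

theory Defs
  imports "HOL-Analysis.Analysis" "HOL-Library.Function_Algebras"
begin

text \<open>Histories are lists of (observation, action) pairs; a history of length h is tau_h.
  A test starting at step h is a pair (o_h..o_{h+W-1}, a_h..a_{h+W-2}).
  A model f is given by its conditional observation probabilities:
  f h tau ob = P_f(o_h = ob | tau_{h-1}), where length tau = h - 1.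
  A policy pi h tau ob a = pi_h(a | tau_{h-1}, o_h = ob).\<close>

type_synonym ('ob, 'a) hist = "('ob \<times> 'a) list"
type_synonym ('ob, 'a) test = "'ob list \<times> 'a list"
type_synonym ('ob, 'a) model = "nat \<Rightarrow> ('ob, 'a) hist \<Rightarrow> 'ob \<Rightarrow> real"
type_synonym ('ob, 'a) policy = "nat \<Rightarrow> ('ob, 'a) hist \<Rightarrow> 'ob \<Rightarrow> 'a \<Rightarrow> real"

definition valid_model :: "nat \<Rightarrow> ('ob::finite, 'a) model \<Rightarrow> bool" where
  "valid_model H f \<longleftrightarrow> (\<forall>h \<tau>. 1 \<le> h \<and> h \<le> H \<and> length \<tau> = h - 1 \<longrightarrow>
      (\<forall>ob. 0 \<le> f h \<tau> ob) \<and> (\<Sum>ob\<in>UNIV. f h \<tau> ob) = 1)"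

definition valid_policy :: "nat \<Rightarrow> ('ob, 'a::finite) policy \<Rightarrow> bool" where
  "valid_policy H \<pi> \<longleftrightarrow> (\<forall>h \<tau> ob. 1 \<le> h \<and> h \<le> H \<and> length \<tau> = h - 1 \<longrightarrow>
      (\<forall>a. 0 \<le> \<pi> h \<tau> ob a) \<and> (\<Sum>a\<in>UNIV. \<pi> h \<tau> ob a) = 1)"

definition hist_prob :: "('ob, 'a) model \<Rightarrow> ('ob, 'a) hist \<Rightarrow> real" where
  "hist_prob f \<tau> = (\<Prod>k<length \<tau>. f (Suc k) (take k \<tau>) (fst (\<tau> ! k)))"

text \<open>t is a test starting at step h (with window W = length of its observation list,
  W >= 1, and last observation step h + W - 1 <= H).\<close>
definition is_test :: "nat \<Rightarrow> nat \<Rightarrow> ('ob, 'a) test \<Rightarrow> bool" where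
  "is_test H h t \<longleftrightarrow> length (fst t) = Suc (length (snd t)) \<and> h + length (fst t) \<le> Suc H"

text \<open>P_f(t | tau_{h-1}); 0 if tau_{h-1} is unreachable.\<close>
definition test_prob :: "('ob, 'a) model \<Rightarrow> nat \<Rightarrow> ('ob, 'a) hist \<Rightarrow> ('ob, 'a) test \<Rightarrow> real" where
  "test_prob f h \<tau> t = (if hist_prob f \<tau> > 0 then
      (\<Prod>k<length (fst t). f (h + k) (\<tau> @ zip (take k (fst t)) (take k (snd t))) (fst t ! k))
    else 0)"

text \<open>Vectors in R^{U_h} are functions on tests (only values on U_h matter).\<close>
definition fscale :: "real \<Rightarrow> ('t \<Rightarrow> real) \<Rightarrow> ('t \<Rightarrow> real)" where
  "fscale c v = (\<lambda>u. c * v u)"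

abbreviation fspan :: "('t \<Rightarrow> real) set \<Rightarrow> ('t \<Rightarrow> real) set" where
  "fspan \<equiv> module.span fscale"

abbreviation fdim :: "('t \<Rightarrow> real) set \<Rightarrow> nat" where
  "fdim \<equiv> vector_space.dim fscale"

lemma vector_space_fscale: "vector_space (fscale :: real \<Rightarrow> ('t \<Rightarrow> real) \<Rightarrow> _)"
  by unfold_locales (auto simp: fscale_def fun_eq_iff algebra_simps)

definition l1norm :: "'t set \<Rightarrow> ('t \<Rightarrow> real) \<Rightarrow> real" where
  "l1norm S v = (\<Sum>u\<in>S. \<bar>v u\<bar>)"

definition pred_state :: "('ob, 'a) model \<Rightarrow> (nat \<Rightarrow> ('ob, 'a) test set) \<Rightarrow> nat
    \<Rightarrow> ('ob, 'a) hist \<Rightarrow> ('ob, 'a) test \<Rightarrow> real" where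
  "pred_state f U h \<tau> = (\<lambda>u. if u \<in> U h then test_prob f h \<tau> u else 0)"

definition core_test_sets :: "nat \<Rightarrow> ('ob, 'a) model \<Rightarrow> (nat \<Rightarrow> ('ob, 'a) test set) \<Rightarrow> bool" where
  "core_test_sets H f U \<longleftrightarrow> (\<forall>h\<in>{1..H}. finite (U h) \<and> (\<forall>u\<in>U h. is_test H h u) \<and>
     (\<forall>t. is_test H h t \<longrightarrow> (\<exists>m. \<forall>\<tau>. length \<tau> = h - 1 \<longrightarrow>
        test_prob f h \<tau> t = (\<Sum>u\<in>U h. m u * test_prob f h \<tau> u))))"

text \<open>d_{PSR,h;f}: rank of the matrix with entries P_f(t | tau_h) (rows: tests t starting at
  h+1, columns: histories tau_h), i.e. the dimension of the span of its columns.\<close>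
definition d_psr :: "nat \<Rightarrow> ('ob, 'a) model \<Rightarrow> nat \<Rightarrow> nat" where
  "d_psr H f h = fdim {(\<lambda>t. if is_test H (Suc h) t then test_prob f (Suc h) \<tau> t else 0)
                       | \<tau>. length \<tau> = h}"

definition mat_mul :: "'k set \<Rightarrow> ('i \<Rightarrow> 'k \<Rightarrow> real) \<Rightarrow> ('k \<Rightarrow> 'j \<Rightarrow> real) \<Rightarrow> 'i \<Rightarrow> 'j \<Rightarrow> real" where
  "mat_mul S A B = (\<lambda>i j. \<Sum>k\<in>S. A i k * B k j)"

definition pinv :: "'r set \<Rightarrow> 'c set \<Rightarrow> ('r \<Rightarrow> 'c \<Rightarrow> real) \<Rightarrow> 'c \<Rightarrow> 'r \<Rightarrow> real" where
  "pinv R C K = (THE X. (\<forall>i j. i \<notin> C \<or> j \<notin> R \<longrightarrow> X i j = 0) \<and>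
     (\<forall>i\<in>R. \<forall>j\<in>C. mat_mul R (mat_mul C K X) K i j = K i j) \<and>
     (\<forall>i\<in>C. \<forall>j\<in>R. mat_mul C (mat_mul R X K) X i j = X i j) \<and>
     (\<forall>i\<in>R. \<forall>j\<in>R. mat_mul C K X i j = mat_mul C K X j i) \<and>
     (\<forall>i\<in>C. \<forall>j\<in>C. mat_mul R X K i j = mat_mul R X K j i))"

definition opnorm11_le :: "'r set \<Rightarrow> 'c set \<Rightarrow> ('c \<Rightarrow> 'r \<Rightarrow> real) \<Rightarrow> real \<Rightarrow> bool" where
  "opnorm11_le R C X b \<longleftrightarrow> (\<forall>y. l1norm C (\<lambda>i. \<Sum>j\<in>R. X i j * y j) \<le> b * l1norm R y)"

definition core_mat :: "('ob, 'a) model \<Rightarrow> (nat \<Rightarrow> ('ob, 'a) test set) \<Rightarrow> nat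
    \<Rightarrow> ('ob, 'a) hist list \<Rightarrow> ('ob, 'a) test \<Rightarrow> nat \<Rightarrow> real" where
  "core_mat f U h hs = (\<lambda>u i. pred_state f U (Suc h) (hs ! i) u)"

text \<open>For h >= 1, K_{h;f} is a
  minimiser over admissible choices of histories (finitely many), so the bound holds iff some
  admissible choice satisfies it. K_{0;f} = q_{0;f}.\<close>
definition core_bound :: "nat \<Rightarrow> ('ob, 'a) model \<Rightarrow> (nat \<Rightarrow> ('ob, 'a) test set) \<Rightarrow> real \<Rightarrow> nat \<Rightarrow> bool" where
  "core_bound H f U \<alpha> h \<longleftrightarrow>
    (if h = 0 then opnorm11_le (U 1) {..<1} (pinv (U 1) {..<1} (core_mat f U 0 [[]])) (1 / \<alpha>)
     else (\<exists>hs. length hs = d_psr H f h \<and> (\<forall>\<tau>\<in>set hs. length \<tau> = h) \<and>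
        (\<forall>\<tau>. length \<tau> = h \<longrightarrow> pred_state f U (Suc h) \<tau> \<in> fspan (pred_state f U (Suc h) ` set hs)) \<and>
        opnorm11_le (U (Suc h)) {..<length hs}
           (pinv (U (Suc h)) {..<length hs} (core_mat f U h hs)) (1 / \<alpha>)))"

text \<open>m_{t,h;f}, chosen (uniquely) in the column space of K_{h-1;f}, which is the span of all
  predictive states q_{tau_{h-1};f}.\<close>
definition m_vec :: "('ob, 'a) model \<Rightarrow> (nat \<Rightarrow> ('ob, 'a) test set) \<Rightarrow> nat
    \<Rightarrow> ('ob, 'a) test \<Rightarrow> ('ob, 'a) test \<Rightarrow> real" where
  "m_vec f U h t = (THE m. m \<in> fspan {pred_state f U h \<tau> | \<tau>. length \<tau> = h - 1} \<and>
     (\<forall>\<tau>. length \<tau> = h - 1 \<longrightarrow> test_prob f h \<tau> t = (\<Sum>u\<in>U h. m u * pred_state f U h \<tau> u)))"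

definition M_apply :: "('ob, 'a) model \<Rightarrow> (nat \<Rightarrow> ('ob, 'a) test set) \<Rightarrow> 'ob \<Rightarrow> 'a \<Rightarrow> nat
    \<Rightarrow> (('ob, 'a) test \<Rightarrow> real) \<Rightarrow> ('ob, 'a) test \<Rightarrow> real" where
  "M_apply f U ob a h x = (\<lambda>u. if u \<in> U (Suc h)
      then (\<Sum>v\<in>U h. m_vec f U h (ob # fst u, a # snd u) v * x v) else 0)"

fun M_prod :: "('ob, 'a) model \<Rightarrow> (nat \<Rightarrow> ('ob, 'a) test set) \<Rightarrow> nat \<Rightarrow> ('ob, 'a) hist
    \<Rightarrow> (('ob, 'a) test \<Rightarrow> real) \<Rightarrow> ('ob, 'a) test \<Rightarrow> real" where
  "M_prod f U h [] x = x"
| "M_prod f U h ((ob, a) # rest) x = M_prod f U (Suc h) rest (M_apply f U ob a h x)"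

definition pol_prob :: "('ob, 'a) policy \<Rightarrow> nat \<Rightarrow> ('ob, 'a) hist \<Rightarrow> ('ob, 'a) hist \<Rightarrow> real" where
  "pol_prob \<pi> j1 \<tau> seg = (\<Prod>k<length seg. \<pi> (j1 + k) (\<tau> @ take k seg) (fst (seg ! k)) (snd (seg ! k)))"

definition UA_card :: "nat \<Rightarrow> (nat \<Rightarrow> ('ob, 'a) test set) \<Rightarrow> nat" where
  "UA_card H U = Max ((\<lambda>h. card (snd ` U h)) ` {1..H})"

end

theory Submission
  imports Defs
begin


definition ip :: "'r set \<Rightarrow> ('r \<Rightarrow> real) \<Rightarrow> ('r \<Rightarrow> real) \<Rightarrow> real" where
  "ip R v w = (\<Sum>r\<in>R. v r * w r)"

lemma sum_sq_zero:
  fixes v :: "'r \<Rightarrow> real"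
  assumes "finite R" "(\<Sum>r\<in>R. v r * v r) = 0" "r \<in> R"
  shows "v r = 0"
proof -
  have "\<forall>r\<in>R. v r * v r = 0"
    using assms(1,2) by (subst sum_nonneg_eq_0_iff[symmetric]) auto
  then show ?thesis using assms(3) by simp
qed

lemma normal_eq:
  fixes col :: "'c \<Rightarrow> 'r \<Rightarrow> real"
  assumes R: "finite R" and C: "finite C"
  shows "\<exists>c. \<forall>j\<in>C. (\<Sum>r\<in>R. (y r - (\<Sum>k\<in>C. c k * col k r)) * col j r) = 0"
  using C
proof (induction C arbitrary: y rule: finite_induct)
  case empty
  then show ?case by simp
next
  case (insert a C)
  obtain d where d: "\<forall>j\<in>C. (\<Sum>r\<in>R. (col a r - (\<Sum>k\<in>C. d k * col k r)) * col j r) = 0"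
    using insert.IH by blast
  obtain e where e: "\<forall>j\<in>C. (\<Sum>r\<in>R. (y r - (\<Sum>k\<in>C. e k * col k r)) * col j r) = 0"
    using insert.IH by blast
  define v where "v = (\<lambda>r. col a r - (\<Sum>k\<in>C. d k * col k r))"
  define y1 where "y1 = (\<lambda>r. y r - (\<Sum>k\<in>C. e k * col k r))"
  define nv where "nv = (\<Sum>r\<in>R. v r * v r)"
  define t where "t = (if nv = 0 then 0 else (\<Sum>r\<in>R. y1 r * v r) / nv)"
  define y2 where "y2 = (\<lambda>r. y1 r - t * v r)"
  define c where "c = (\<lambda>k. if k = a then t else e k - t * d k)"
  have y2eq: "y2 r = y r - (\<Sum>k\<in>insert a C. c k * col k r)" for r
  proof -
    have "(\<Sum>k\<in>insert a C. c k * col k r) = t * col a r + (\<Sum>k\<in>C. (e k - t * d k) * col k r)"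
      using insert.hyps by (simp add: c_def) (intro sum.cong, auto)
    also have "\<dots> = t * col a r + (\<Sum>k\<in>C. e k * col k r) - t * (\<Sum>k\<in>C. d k * col k r)"
      by (simp add: algebra_simps sum_subtractf sum_distrib_left)
    finally show ?thesis by (simp add: y2_def y1_def v_def algebra_simps)
  qed
  have orthC: "(\<Sum>r\<in>R. y2 r * col j r) = 0" if "j \<in> C" for j
  proof -
    have "(\<Sum>r\<in>R. y2 r * col j r) = (\<Sum>r\<in>R. y1 r * col j r) - t * (\<Sum>r\<in>R. v r * col j r)"
      by (simp add: y2_def algebra_simps sum_subtractf sum_distrib_left)
    then show ?thesis using d e that by (simp add: y1_def v_def)
  qed
  have orthv: "(\<Sum>r\<in>R. y2 r * v r) = 0"
  proof (cases "nv = 0")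
    case True
    then have "v r = 0" if "r \<in> R" for r using sum_sq_zero[OF R] that by (simp add: nv_def)
    then show ?thesis by simp
  next
    case False
    have "(\<Sum>r\<in>R. y2 r * v r) = (\<Sum>r\<in>R. y1 r * v r) - t * nv"
      by (simp add: y2_def nv_def algebra_simps sum_subtractf sum_distrib_left)
    then show ?thesis using False by (simp add: t_def)
  qed
  have "(\<Sum>r\<in>R. y2 r * col a r) = (\<Sum>r\<in>R. y2 r * v r) + (\<Sum>k\<in>C. d k * (\<Sum>r\<in>R. y2 r * col k r))"
    by (simp add: v_def algebra_simps sum_subtractf sum_distrib_left sum.distrib sum_distrib_right)
      (rule sum.swap)
  also have "\<dots> = 0" using orthv orthC by simp
  finally have orta: "(\<Sum>r\<in>R. y2 r * col a r) = 0" .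
  show ?case
    apply (rule exI[of _ c])
    using orta orthC by (auto simp: y2eq[symmetric])
qed



definition penrose :: "'r set \<Rightarrow> 'c set \<Rightarrow> ('r \<Rightarrow> 'c \<Rightarrow> real) \<Rightarrow> ('c \<Rightarrow> 'r \<Rightarrow> real) \<Rightarrow> bool" where
  "penrose R C K X \<longleftrightarrow> (\<forall>i j. i \<notin> C \<or> j \<notin> R \<longrightarrow> X i j = 0) \<and>
     (\<forall>i\<in>R. \<forall>j\<in>C. mat_mul R (mat_mul C K X) K i j = K i j) \<and>
     (\<forall>i\<in>C. \<forall>j\<in>R. mat_mul C (mat_mul R X K) X i j = X i j) \<and>
     (\<forall>i\<in>R. \<forall>j\<in>R. mat_mul C K X i j = mat_mul C K X j i) \<and>
     (\<forall>i\<in>C. \<forall>j\<in>C. mat_mul R X K i j = mat_mul R X K j i)"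

lemma pinv_def2: "pinv R C K = (THE X. penrose R C K X)"
  unfolding pinv_def penrose_def by simp

lemma gram_zero:
  fixes D :: "'a \<Rightarrow> real"
  assumes A: "finite A" and DL: "\<forall>a\<in>A. D a = (\<Sum>b\<in>B. L a b * W b)"
    and G: "\<forall>b\<in>B. (\<Sum>a\<in>A. L a b * D a) = 0" and a: "a \<in> A"
  shows "D a = 0"
proof -
  have "(\<Sum>a\<in>A. D a * D a) = (\<Sum>a\<in>A. D a * (\<Sum>b\<in>B. L a b * W b))"
    using DL by (intro sum.cong) auto
  also have "\<dots> = (\<Sum>b\<in>B. W b * (\<Sum>a\<in>A. L a b * D a))"
    by (simp add: sum_distrib_left sum_distrib_right mult_ac) (rule sum.swap)
  also have "\<dots> = 0" using G by simp
  finally show ?thesis using sum_sq_zero[OF A _ a] by blast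
qed

lemma swap3:
  fixes a :: "'i \<Rightarrow> real"
  shows "(\<Sum>i\<in>I. a i * (\<Sum>j\<in>J. b i j * c j)) = (\<Sum>j\<in>J. (\<Sum>i\<in>I. a i * b i j) * c j)"
proof -
  have "(\<Sum>i\<in>I. a i * (\<Sum>j\<in>J. b i j * c j)) = (\<Sum>i\<in>I. \<Sum>j\<in>J. a i * b i j * c j)"
    by (simp add: sum_distrib_left mult.assoc)
  also have "\<dots> = (\<Sum>j\<in>J. \<Sum>i\<in>I. a i * b i j * c j)" by (rule sum.swap)
  also have "\<dots> = (\<Sum>j\<in>J. (\<Sum>i\<in>I. a i * b i j) * c j)" by (simp add: sum_distrib_right)
  finally show ?thesis .
qed

lemma penrose_exists:
  fixes K :: "'r \<Rightarrow> 'c \<Rightarrow> real"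
  assumes R: "finite R" and C: "finite C"
  shows "\<exists>X. penrose R C K X"
proof -
  have "\<forall>j. \<exists>c. \<forall>k\<in>C. (\<Sum>r\<in>R. ((if r = j then 1 else 0) - (\<Sum>k'\<in>C. c k' * K r k')) * K r k) = 0"
    by (intro allI normal_eq[OF R C])
  then obtain c where c0: "\<And>j k. k \<in> C \<Longrightarrow>
      (\<Sum>r\<in>R. ((if r = j then 1 else 0) - (\<Sum>k'\<in>C. c j k' * K r k')) * K r k) = 0"
    by metis
  have c: "(\<Sum>r\<in>R. (\<Sum>k'\<in>C. c j k' * K r k') * K r k) = K j k" if "j \<in> R" "k \<in> C" for j k
  proof -
    have "(\<Sum>r\<in>R. ((if r = j then 1 else 0) - (\<Sum>k'\<in>C. c j k' * K r k')) * K r k)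
       = (\<Sum>r\<in>R. (if r = j then 1 else 0) * K r k) - (\<Sum>r\<in>R. (\<Sum>k'\<in>C. c j k' * K r k') * K r k)"
      by (simp add: left_diff_distrib sum_subtractf)
    also have "(\<Sum>r\<in>R. (if r = j then 1 else 0) * K r k) = (\<Sum>r\<in>R. if r = j then K j k else 0)"
      by (rule sum.cong) auto
    also have "\<dots> = K j k"
      using R that by simp
    finally show ?thesis using c0[OF that(2), of j] by simp
  qed
  have "\<forall>j. \<exists>e. \<forall>r\<in>R. (\<Sum>k\<in>C. (c j k - (\<Sum>r'\<in>R. e r' * K r' k)) * K r k) = 0"
    by (intro allI normal_eq[OF C R])
  then obtain e where e: "\<And>j r. r \<in> R \<Longrightarrow>
      (\<Sum>k\<in>C. (c j k - (\<Sum>r'\<in>R. e j r' * K r' k)) * K r k) = 0"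
    by metis
  define X where "X = (\<lambda>k j. if k \<in> C \<and> j \<in> R then (\<Sum>r'\<in>R. e j r' * K r' k) else 0)"
  define P where "P = mat_mul C K X"
  define Q where "Q = mat_mul R X K"
  have XE: "X k j = (\<Sum>r\<in>R. K r k * e j r)" if "k \<in> C" "j \<in> R" for k j
    using that by (simp add: X_def mult_ac)
  have KZ: "(\<Sum>k\<in>C. K r k * X k j) = (\<Sum>k\<in>C. K r k * c j k)" if "r \<in> R" "j \<in> R" for r j
  proof -
    have "(\<Sum>k\<in>C. K r k * c j k) - (\<Sum>k\<in>C. K r k * X k j) =
          (\<Sum>k\<in>C. (c j k - (\<Sum>r'\<in>R. e j r' * K r' k)) * K r k)"
      using that by (simp add: X_def algebra_simps sum_subtractf)
    then show ?thesis using e[OF that(1), of j] by simp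
  qed
  have fa: "(\<Sum>r\<in>R. K r k * P r j) = K j k" if "k \<in> C" "j \<in> R" for k j
  proof -
    have "(\<Sum>r\<in>R. K r k * P r j) = (\<Sum>r\<in>R. K r k * (\<Sum>k'\<in>C. K r k' * c j k'))"
      using KZ that by (auto simp: P_def mat_mul_def intro!: sum.cong)
    also have "\<dots> = K j k" using c[OF that(2,1)] by (simp add: mult_ac sum_distrib_left sum_distrib_right)
    finally show ?thesis .
  qed
  have p1: "(\<Sum>s\<in>R. P r s * K s k0) = K r k0" if "r \<in> R" "k0 \<in> C" for r k0
  proof -
    define D where "D = (\<lambda>r. (\<Sum>s\<in>R. P r s * K s k0) - K r k0)"
    define W where "W = (\<lambda>k. (\<Sum>s\<in>R. X k s * K s k0) - (if k = k0 then 1 else 0))"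
    have "D r = 0"
    proof (rule gram_zero[OF R _ _ that(1), where D=D and B=C and L="\<lambda>r k. K r k" and W=W])
      show "\<forall>a\<in>R. D a = (\<Sum>b\<in>C. K a b * W b)"
      proof
        fix a assume "a \<in> R"
        have "(\<Sum>b\<in>C. K a b * W b) = (\<Sum>b\<in>C. K a b * (\<Sum>s\<in>R. X b s * K s k0)) - (\<Sum>b\<in>C. K a b * (if b = k0 then 1 else 0))"
          by (simp add: W_def right_diff_distrib sum_subtractf)
        also have "(\<Sum>b\<in>C. K a b * (if b = k0 then 1 else 0)) = (\<Sum>b\<in>C. if b = k0 then K a k0 else 0)"
          by (rule sum.cong) auto
        also have "\<dots> = K a k0" using C that by simp
        also have "(\<Sum>b\<in>C. K a b * (\<Sum>s\<in>R. X b s * K s k0)) = (\<Sum>s\<in>R. P a s * K s k0)"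
          unfolding P_def mat_mul_def by (rule swap3)
        finally show "D a = (\<Sum>b\<in>C. K a b * W b)" by (simp add: D_def)
      qed
      show "\<forall>b\<in>C. (\<Sum>a\<in>R. K a b * D a) = 0"
      proof
        fix b assume b: "b \<in> C"
        have "(\<Sum>a\<in>R. K a b * D a) = (\<Sum>a\<in>R. K a b * (\<Sum>s\<in>R. P a s * K s k0)) - (\<Sum>a\<in>R. K a b * K a k0)"
          by (simp add: D_def algebra_simps sum_subtractf)
        also have "(\<Sum>a\<in>R. K a b * (\<Sum>s\<in>R. P a s * K s k0)) = (\<Sum>s\<in>R. (\<Sum>a\<in>R. K a b * P a s) * K s k0)"
          by (rule swap3)
        also have "\<dots> = (\<Sum>s\<in>R. K s b * K s k0)" using fa[OF b] by simp
        finally show "(\<Sum>a\<in>R. K a b * D a) = 0" by simp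
      qed
    qed
    then show ?thesis by (simp add: D_def)
  qed
  have p2: "P s t = (\<Sum>r\<in>R. P r s * P r t)" if "s \<in> R" "t \<in> R" for s t
  proof -
    have "(\<Sum>r\<in>R. P r s * P r t) = (\<Sum>r\<in>R. P r s * (\<Sum>k\<in>C. K r k * X k t))"
      by (simp add: P_def mat_mul_def)
    also have "\<dots> = (\<Sum>k\<in>C. (\<Sum>r\<in>R. P r s * K r k) * X k t)" by (rule swap3)
    also have "\<dots> = (\<Sum>k\<in>C. K s k * X k t)"
      using fa that by (auto simp: mult_ac intro!: sum.cong)
    finally show ?thesis by (simp add: P_def mat_mul_def)
  qed
  have psym: "P s t = P t s" if "s \<in> R" "t \<in> R" for s t
    using p2[OF that] p2[OF that(2,1)] by (simp add: mult_ac)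
  define E' where "E' = (\<lambda>r l. \<Sum>s\<in>R. e s r * K s l)"
  have QE: "Q k l = (\<Sum>r\<in>R. K r k * E' r l)" if "k \<in> C" for k l
  proof -
    have "Q k l = (\<Sum>s\<in>R. (\<Sum>r\<in>R. K r k * e s r) * K s l)"
      using XE that by (auto simp: Q_def mat_mul_def intro!: sum.cong)
    also have "\<dots> = (\<Sum>r\<in>R. K r k * E' r l)"
      unfolding E'_def by (rule swap3[symmetric])
    finally show ?thesis .
  qed
  have KQ: "(\<Sum>k\<in>C. K r k * Q k m) = K r m" if "r \<in> R" "m \<in> C" for r m
  proof -
    have "(\<Sum>k\<in>C. K r k * Q k m) = (\<Sum>s\<in>R. P r s * K s m)"
      unfolding Q_def P_def mat_mul_def by (rule swap3)
    then show ?thesis using p1 that by simp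
  qed
  have q2: "(\<Sum>k\<in>C. Q k l * Q k m) = Q m l" if "l \<in> C" "m \<in> C" for l m
  proof -
    have "(\<Sum>k\<in>C. Q k l * Q k m) = (\<Sum>k\<in>C. (\<Sum>r\<in>R. K r k * E' r l) * Q k m)"
      using QE by simp
    also have "\<dots> = (\<Sum>r\<in>R. E' r l * (\<Sum>k\<in>C. K r k * Q k m))"
      by (simp add: sum_distrib_left sum_distrib_right mult_ac) (rule sum.swap)
    also have "\<dots> = (\<Sum>r\<in>R. E' r l * K r m)" using KQ that by simp
    also have "\<dots> = Q m l" using QE[OF that(2)] by (simp add: mult_ac)
    finally show ?thesis .
  qed
  have qsym: "Q l m = Q m l" if "l \<in> C" "m \<in> C" for l m
    using q2[OF that] q2[OF that(2,1)] by (simp add: mult_ac)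
  have p4: "(\<Sum>l\<in>C. Q k l * X l s) = X k s" if "k \<in> C" "s \<in> R" for k s
  proof -
    define G where "G = (\<lambda>k. (\<Sum>l\<in>C. Q k l * X l s) - X k s)"
    define W where "W = (\<lambda>r. (\<Sum>l\<in>C. E' r l * X l s) - e s r)"
    have "G k = 0"
    proof (rule gram_zero[OF C _ _ that(1), where D=G and B=R and L="\<lambda>k r. K r k" and W=W])
      show "\<forall>a\<in>C. G a = (\<Sum>b\<in>R. K b a * W b)"
      proof
        fix a assume a: "a \<in> C"
        have "(\<Sum>b\<in>R. K b a * W b) = (\<Sum>b\<in>R. K b a * (\<Sum>l\<in>C. E' b l * X l s)) - (\<Sum>b\<in>R. K b a * e s b)"
          by (simp add: W_def algebra_simps sum_subtractf)
        also have "(\<Sum>b\<in>R. K b a * (\<Sum>l\<in>C. E' b l * X l s)) = (\<Sum>l\<in>C. Q a l * X l s)"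
          by (subst swap3) (simp add: QE[OF a])
        also have "(\<Sum>b\<in>R. K b a * e s b) = X a s" using XE[OF a that(2)] by simp
        finally show "G a = (\<Sum>b\<in>R. K b a * W b)" by (simp add: G_def)
      qed
      show "\<forall>b\<in>R. (\<Sum>a\<in>C. K b a * G a) = 0"
      proof
        fix b assume b: "b \<in> R"
        have "(\<Sum>a\<in>C. K b a * G a) = (\<Sum>a\<in>C. K b a * (\<Sum>l\<in>C. Q a l * X l s)) - (\<Sum>a\<in>C. K b a * X a s)"
          by (simp add: G_def algebra_simps sum_subtractf)
        also have "(\<Sum>a\<in>C. K b a * (\<Sum>l\<in>C. Q a l * X l s)) = (\<Sum>l\<in>C. (\<Sum>a\<in>C. K b a * Q a l) * X l s)"
          by (rule swap3)
        also have "\<dots> = (\<Sum>l\<in>C. K b l * X l s)" using KQ[OF b] by simp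
        finally show "(\<Sum>a\<in>C. K b a * G a) = 0" by simp
      qed
    qed
    then show ?thesis by (simp add: G_def)
  qed
  have z: "\<forall>i j. i \<notin> C \<or> j \<notin> R \<longrightarrow> X i j = 0" by (simp add: X_def)
  have "penrose R C K X"
    unfolding penrose_def P_def[symmetric] Q_def[symmetric]
    using z p1 psym qsym p4 by (auto simp: mat_mul_def)
  then show ?thesis by blast
qed



lemma penrose_unique:
  fixes K :: "'r \<Rightarrow> 'c \<Rightarrow> real"
  assumes X: "penrose R C K X" and Y: "penrose R C K Y"
  shows "X = Y"
proof -
  define P where "P = mat_mul C K X"
  define P' where "P' = mat_mul C K Y"
  define Q where "Q = mat_mul R X K"
  define Q' where "Q' = mat_mul R Y K"
  have X1: "(\<Sum>s\<in>R. P r s * K s k) = K r k" if "r \<in> R" "k \<in> C" for r k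
    using X that unfolding penrose_def P_def mat_mul_def[of R] by auto
  have Y1: "(\<Sum>s\<in>R. P' r s * K s k) = K r k" if "r \<in> R" "k \<in> C" for r k
    using Y that unfolding penrose_def P'_def mat_mul_def[of R] by auto
  have X2: "(\<Sum>l\<in>C. Q k l * X l s) = X k s" if "k \<in> C" "s \<in> R" for k s
    using X that unfolding penrose_def Q_def mat_mul_def[of C "mat_mul R X K"] by auto
  have Y2: "(\<Sum>l\<in>C. Q' k l * Y l s) = Y k s" if "k \<in> C" "s \<in> R" for k s
    using Y that unfolding penrose_def Q'_def mat_mul_def[of C "mat_mul R Y K"] by auto
  have X3: "P r s = P s r" if "r \<in> R" "s \<in> R" for r s
    using X that unfolding penrose_def P_def by auto
  have Y3: "P' r s = P' s r" if "r \<in> R" "s \<in> R" for r s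
    using Y that unfolding penrose_def P'_def by auto
  have X4: "Q r s = Q s r" if "r \<in> C" "s \<in> C" for r s
    using X that unfolding penrose_def Q_def by auto
  have Y4: "Q' r s = Q' s r" if "r \<in> C" "s \<in> C" for r s
    using Y that unfolding penrose_def Q'_def by auto
  have X0: "X i j = 0" if "i \<notin> C \<or> j \<notin> R" for i j
    using X that unfolding penrose_def by auto
  have Y0: "Y i j = 0" if "i \<notin> C \<or> j \<notin> R" for i j
    using Y that unfolding penrose_def by auto
  have PP: "(\<Sum>t\<in>R. P' r t * P t s) = P r s" if "r \<in> R" for r s
  proof -
    have "(\<Sum>t\<in>R. P' r t * P t s) = (\<Sum>k\<in>C. (\<Sum>t\<in>R. P' r t * K t k) * X k s)"
      unfolding P_def mat_mul_def by (rule swap3)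
    also have "\<dots> = P r s" using Y1 that by (simp add: P_def mat_mul_def)
    finally show ?thesis .
  qed
  have PP': "(\<Sum>t\<in>R. P r t * P' t s) = P' r s" if "r \<in> R" for r s
  proof -
    have "(\<Sum>t\<in>R. P r t * P' t s) = (\<Sum>k\<in>C. (\<Sum>t\<in>R. P r t * K t k) * Y k s)"
      unfolding P'_def mat_mul_def by (rule swap3)
    also have "\<dots> = P' r s" using X1 that by (simp add: P'_def mat_mul_def)
    finally show ?thesis .
  qed
  have Peq: "P r s = P' r s" if "r \<in> R" "s \<in> R" for r s
  proof -
    have "P r s = P s r" using X3 that by simp
    also have "\<dots> = (\<Sum>t\<in>R. P' s t * P t r)" using PP that by simp
    also have "\<dots> = (\<Sum>t\<in>R. P r t * P' t s)" using X3 Y3 that by (auto intro!: sum.cong simp: mult_ac)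
    also have "\<dots> = P' r s" using PP' that by simp
    finally show ?thesis .
  qed
  have KQ': "(\<Sum>m\<in>C. K r m * Q' m l) = K r l" if "r \<in> R" "l \<in> C" for r l
  proof -
    have "(\<Sum>m\<in>C. K r m * Q' m l) = (\<Sum>s\<in>R. P' r s * K s l)"
      unfolding Q'_def P'_def mat_mul_def by (rule swap3)
    then show ?thesis using Y1 that by simp
  qed
  have KQ: "(\<Sum>m\<in>C. K r m * Q m l) = K r l" if "r \<in> R" "l \<in> C" for r l
  proof -
    have "(\<Sum>m\<in>C. K r m * Q m l) = (\<Sum>s\<in>R. P r s * K s l)"
      unfolding Q_def P_def mat_mul_def by (rule swap3)
    then show ?thesis using X1 that by simp
  qed
  have QQ: "(\<Sum>m\<in>C. Q k m * Q' m l) = Q k l" if "l \<in> C" for k l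
  proof -
    have "(\<Sum>m\<in>C. Q k m * Q' m l) = (\<Sum>r\<in>R. X k r * (\<Sum>m\<in>C. K r m * Q' m l))"
      unfolding Q_def mat_mul_def by (rule swap3[symmetric])
    also have "\<dots> = Q k l" using KQ' that by (simp add: Q_def mat_mul_def)
    finally show ?thesis .
  qed
  have QQ': "(\<Sum>m\<in>C. Q' k m * Q m l) = Q' k l" if "l \<in> C" for k l
  proof -
    have "(\<Sum>m\<in>C. Q' k m * Q m l) = (\<Sum>r\<in>R. Y k r * (\<Sum>m\<in>C. K r m * Q m l))"
      unfolding Q'_def mat_mul_def by (rule swap3[symmetric])
    also have "\<dots> = Q' k l" using KQ that by (simp add: Q'_def mat_mul_def)
    finally show ?thesis .
  qed
  have Qeq: "Q k l = Q' k l" if "k \<in> C" "l \<in> C" for k l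
  proof -
    have "Q k l = Q l k" using X4 that by simp
    also have "\<dots> = (\<Sum>m\<in>C. Q l m * Q' m k)" using QQ that by simp
    also have "\<dots> = (\<Sum>m\<in>C. Q' k m * Q m l)" using X4 Y4 that by (auto intro!: sum.cong simp: mult_ac)
    also have "\<dots> = Q' k l" using QQ' that by simp
    finally show ?thesis .
  qed
  have "X k s = Y k s" if "k \<in> C" "s \<in> R" for k s
  proof -
    have "X k s = (\<Sum>l\<in>C. Q' k l * X l s)" using X2[OF that] Qeq that by (auto intro!: sum.cong)
    also have "\<dots> = (\<Sum>r\<in>R. Y k r * P r s)"
      unfolding Q'_def P_def mat_mul_def by (rule swap3[symmetric])
    also have "\<dots> = (\<Sum>r\<in>R. Y k r * P' r s)" using Peq that by (auto intro!: sum.cong)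
    also have "\<dots> = (\<Sum>l\<in>C. Q' k l * Y l s)"
      unfolding Q'_def P'_def mat_mul_def by (rule swap3)
    also have "\<dots> = Y k s" using Y2 that by simp
    finally show ?thesis .
  qed
  then show ?thesis using X0 Y0 by (intro ext) metis
qed

lemma pinv_penrose:
  assumes "finite R" "finite C"
  shows "penrose R C K (pinv R C K)"
  unfolding pinv_def2
  using penrose_exists[OF assms] penrose_unique by (metis theI)

lemma pinv_KtKX:
  assumes "finite R" "finite C" "k \<in> C" "s \<in> R"
  shows "(\<Sum>r\<in>R. K r k * (\<Sum>k'\<in>C. K r k' * pinv R C K k' s)) = K s k"
proof -
  define X where "X = pinv R C K"
  define P where "P = mat_mul C K X"
  have pen: "penrose R C K X" using pinv_penrose[OF assms(1,2)] by (simp add: X_def)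
  have "K s k = (\<Sum>r\<in>R. P s r * K r k)"
    using pen assms(3,4) unfolding penrose_def P_def mat_mul_def[of R] by auto
  also have "\<dots> = (\<Sum>r\<in>R. K r k * P r s)"
    using pen assms(3,4) unfolding penrose_def P_def by (auto intro!: sum.cong simp: mult_ac)
  finally show ?thesis by (simp add: P_def X_def mat_mul_def)
qed



lemma fin_hist: "finite {\<tau> :: ('ob::finite \<times> 'a::finite) list. length \<tau> = n}"
  using finite_lists_length_eq[of "UNIV :: ('ob \<times> 'a) set" n] by simp

lemma sum_fun_apply: "(sum g A) x = (\<Sum>a\<in>A. g a x)"
proof (cases "finite A")
  case True then show ?thesis by (induction A rule: finite_induct) auto
next
  case False then show ?thesis by simp
qed

lemma fspan_lin:
  fixes g :: "'i \<Rightarrow> 't \<Rightarrow> real"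
  assumes "finite T"
  shows "(\<lambda>r. \<Sum>\<tau>\<in>T. c \<tau> * g \<tau> r) \<in> fspan (g ` T)"
proof -
  interpret V: vector_space "fscale :: real \<Rightarrow> ('t \<Rightarrow> real) \<Rightarrow> ('t \<Rightarrow> real)"
    by (rule vector_space_fscale)
  have "(\<Sum>\<tau>\<in>T. fscale (c \<tau>) (g \<tau>)) \<in> fspan (g ` T)"
    by (intro V.span_sum V.span_scale V.span_base) auto
  moreover have "(\<Sum>\<tau>\<in>T. fscale (c \<tau>) (g \<tau>)) = (\<lambda>r. \<Sum>\<tau>\<in>T. c \<tau> * g \<tau> r)"
    by (rule ext) (simp add: sum_fun_apply fscale_def)
  ultimately show ?thesis by simp
qed

lemma fspan_zero_outside:
  fixes v :: "'t \<Rightarrow> real"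
  assumes "v \<in> fspan S" "\<forall>w\<in>S. \<forall>r. r \<notin> R \<longrightarrow> w r = 0" "r \<notin> R"
  shows "v r = 0"
proof -
  interpret V: vector_space "fscale :: real \<Rightarrow> ('t \<Rightarrow> real) \<Rightarrow> ('t \<Rightarrow> real)"
    by (rule vector_space_fscale)
  have "V.subspace {v. \<forall>r. r \<notin> R \<longrightarrow> v r = 0}"
    by (auto simp: V.subspace_def fscale_def)
  then have "\<forall>r. r \<notin> R \<longrightarrow> v r = 0"
    using V.span_induct[OF assms(1), where P="\<lambda>v. \<forall>r. r \<notin> R \<longrightarrow> v r = 0"] assms(2) by auto
  then show ?thesis using assms(3) by simp
qed

lemma fspan_orth:
  fixes v :: "'t \<Rightarrow> real"
  assumes "v \<in> fspan S" "\<forall>w\<in>S. (\<Sum>r\<in>R. d r * w r) = 0"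
  shows "(\<Sum>r\<in>R. d r * v r) = 0"
proof -
  interpret V: vector_space "fscale :: real \<Rightarrow> ('t \<Rightarrow> real) \<Rightarrow> ('t \<Rightarrow> real)"
    by (rule vector_space_fscale)
  have "V.subspace {v. (\<Sum>r\<in>R. d r * v r) = 0}"
    by (auto simp: V.subspace_def fscale_def algebra_simps sum.distrib sum_distrib_left[symmetric])
  then show ?thesis
    using V.span_induct[OF assms(1), where P="\<lambda>v. (\<Sum>r\<in>R. d r * v r) = 0"] assms(2) by auto
qed

lemma fspan_sub:
  fixes v :: "'t \<Rightarrow> real"
  assumes "v \<in> fspan S" "S \<subseteq> fspan T"
  shows "v \<in> fspan T"
proof -
  interpret V: vector_space "fscale :: real \<Rightarrow> ('t \<Rightarrow> real) \<Rightarrow> ('t \<Rightarrow> real)"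
    by (rule vector_space_fscale)
  show ?thesis using V.span_minimal[OF assms(2) V.subspace_span] assms(1) by blast
qed

lemma m_vec_prop:
  fixes f :: "('ob::finite, 'a::finite) model"
  assumes fin: "finite (U h)"
    and ex: "\<exists>m. \<forall>\<tau>. length \<tau> = h - 1 \<longrightarrow> test_prob f h \<tau> t = (\<Sum>u\<in>U h. m u * test_prob f h \<tau> u)"
  shows "m_vec f U h t \<in> fspan {pred_state f U h \<tau> | \<tau>. length \<tau> = h - 1} \<and>
    (\<forall>\<tau>. length \<tau> = h - 1 \<longrightarrow> test_prob f h \<tau> t = (\<Sum>u\<in>U h. m_vec f U h t u * pred_state f U h \<tau> u))"
proof -
  interpret V: vector_space "fscale :: real \<Rightarrow> (('ob, 'a) test \<Rightarrow> real) \<Rightarrow> (('ob, 'a) test \<Rightarrow> real)"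
    by (rule vector_space_fscale)
  define T where "T = {\<tau> :: ('ob, 'a) hist. length \<tau> = h - 1}"
  have finT: "finite T" unfolding T_def by (rule fin_hist)
  define q where "q = pred_state f U h"
  have Seq: "{pred_state f U h \<tau> | \<tau>. length \<tau> = h - 1} = q ` T"
    by (auto simp: q_def T_def)
  obtain m0 where m0: "\<And>\<tau>. length \<tau> = h - 1 \<Longrightarrow> test_prob f h \<tau> t = (\<Sum>u\<in>U h. m0 u * test_prob f h \<tau> u)"
    using ex by blast
  obtain c where c: "\<forall>j\<in>T. (\<Sum>r\<in>U h. (m0 r - (\<Sum>k\<in>T. c k * q k r)) * q j r) = 0"
    using normal_eq[OF fin finT, of m0 q] by blast
  define m where "m = (\<lambda>r. \<Sum>k\<in>T. c k * q k r)"
  define Pm where "Pm = (\<lambda>m. m \<in> fspan {pred_state f U h \<tau> | \<tau>. length \<tau> = h - 1} \<and>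
    (\<forall>\<tau>. length \<tau> = h - 1 \<longrightarrow> test_prob f h \<tau> t = (\<Sum>u\<in>U h. m u * pred_state f U h \<tau> u)))"
  have qU: "q \<tau> u = test_prob f h \<tau> u" if "u \<in> U h" for \<tau> u
    using that by (simp add: q_def pred_state_def)
  have Pm: "Pm m"
    unfolding Pm_def
  proof (intro conjI allI impI)
    show "m \<in> fspan {pred_state f U h \<tau> |\<tau>. length \<tau> = h - 1}"
      unfolding Seq m_def by (rule fspan_lin[OF finT])
    fix \<tau> :: "('ob, 'a) hist" assume l: "length \<tau> = h - 1"
    have "test_prob f h \<tau> t = (\<Sum>u\<in>U h. m0 u * q \<tau> u)" using m0[OF l] qU by simp
    also have "\<dots> = (\<Sum>u\<in>U h. m u * q \<tau> u) + (\<Sum>r\<in>U h. (m0 r - m r) * q \<tau> r)"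
      by (simp add: algebra_simps sum_subtractf)
    also have "(\<Sum>r\<in>U h. (m0 r - m r) * q \<tau> r) = 0"
      using c l by (simp add: m_def T_def)
    finally show "test_prob f h \<tau> t = (\<Sum>u\<in>U h. m u * pred_state f U h \<tau> u)" by (simp add: q_def)
  qed
  have uniq: "m1 = m" if "Pm m1" for m1
  proof -
    define d where "d = m1 - m"
    have dS: "d \<in> fspan (q ` T)"
      using that Pm unfolding Pm_def d_def Seq by (intro V.span_diff) auto
    have orth: "\<forall>w\<in>q ` T. (\<Sum>r\<in>U h. d r * w r) = 0"
    proof
      fix w assume "w \<in> q ` T"
      then obtain \<tau> where \<tau>: "\<tau> \<in> T" "w = q \<tau>" by auto
      have "(\<Sum>r\<in>U h. d r * w r) = (\<Sum>r\<in>U h. m1 r * q \<tau> r) - (\<Sum>r\<in>U h. m r * q \<tau> r)"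
        by (simp add: d_def \<tau> algebra_simps sum_subtractf)
      also have "\<dots> = 0" using that Pm \<tau> unfolding Pm_def T_def q_def by auto
      finally show "(\<Sum>r\<in>U h. d r * w r) = 0" .
    qed
    have "(\<Sum>r\<in>U h. d r * d r) = 0" by (rule fspan_orth[OF dS orth])
    then have in0: "d r = 0" if "r \<in> U h" for r using sum_sq_zero[OF fin] that by blast
    have out0: "d r = 0" if "r \<notin> U h" for r
      by (rule fspan_zero_outside[OF dS _ that]) (auto simp: q_def pred_state_def)
    have "d = 0" using in0 out0 by (intro ext) (metis zero_fun_apply)
    then show ?thesis by (simp add: d_def)
  qed
  have "Pm (THE m. Pm m)"
    using Pm uniq by (metis theI)
  moreover have "m_vec f U h t = (THE m. Pm m)" unfolding m_vec_def Pm_def by (rule refl)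
  ultimately have "Pm (m_vec f U h t)" by simp
  then show ?thesis unfolding Pm_def .
qed



lemma f_nonneg:
  assumes "valid_model H f" "1 \<le> h" "h \<le> H" "length \<tau> = h - 1"
  shows "0 \<le> f h \<tau> ob"
  using assms unfolding valid_model_def by blast

lemma hist_prob_nonneg:
  assumes "valid_model H f" "length \<tau> \<le> H"
  shows "0 \<le> hist_prob f \<tau>"
  unfolding hist_prob_def
  by (rule prod_nonneg) (use assms in \<open>auto intro!: f_nonneg[OF assms(1)]\<close>)

lemma hist_prob_snoc:
  assumes "length \<tau> = h - 1" "1 \<le> h"
  shows "hist_prob f (\<tau> @ [(ob, a)]) = hist_prob f \<tau> * f h \<tau> ob"
proof -
  have "hist_prob f (\<tau> @ [(ob, a)]) = (\<Prod>k<Suc (length \<tau>). f (Suc k) (take k (\<tau> @ [(ob, a)])) (fst ((\<tau> @ [(ob, a)]) ! k)))"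
    by (simp add: hist_prob_def)
  also have "\<dots> = (\<Prod>k<length \<tau>. f (Suc k) (take k (\<tau> @ [(ob, a)])) (fst ((\<tau> @ [(ob, a)]) ! k))) * 
      f (Suc (length \<tau>)) (take (length \<tau>) (\<tau> @ [(ob, a)])) (fst ((\<tau> @ [(ob, a)]) ! length \<tau>))"
    by (rule prod.lessThan_Suc)
  also have "f (Suc (length \<tau>)) (take (length \<tau>) (\<tau> @ [(ob, a)])) (fst ((\<tau> @ [(ob, a)]) ! length \<tau>)) = f h \<tau> ob"
    using assms by (simp add: nth_append)
  also have "(\<Prod>k<length \<tau>. f (Suc k) (take k (\<tau> @ [(ob, a)])) (fst ((\<tau> @ [(ob, a)]) ! k))) = hist_prob f \<tau>"
    unfolding hist_prob_def by (intro prod.cong) (auto simp: nth_append)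
  finally show ?thesis .
qed

lemma tp_cons:
  assumes vm: "valid_model H f" and h: "1 \<le> h" "h \<le> H" and l: "length \<tau> = h - 1"
  shows "test_prob f h \<tau> (ob # os, a # as) = f h \<tau> ob * test_prob f (Suc h) (\<tau> @ [(ob, a)]) (os, as)"
proof -
  have prodeq: "(\<Prod>k<length (fst (ob # os, a # as)). f (h + k) (\<tau> @ zip (take k (fst (ob # os, a # as))) (take k (snd (ob # os, a # as)))) (fst (ob # os, a # as) ! k))
    = f h \<tau> ob * (\<Prod>k<length (fst (os, as)). f (Suc h + k) ((\<tau> @ [(ob, a)]) @ zip (take k (fst (os, as))) (take k (snd (os, as)))) (fst (os, as) ! k))"
    by (simp add: prod.lessThan_Suc_shift del: prod.lessThan_Suc)
  have hp: "0 \<le> hist_prob f \<tau>" using hist_prob_nonneg[OF vm] l h by simp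
  have fp: "0 \<le> f h \<tau> ob" using f_nonneg[OF vm h l] .
  have hs: "hist_prob f (\<tau> @ [(ob, a)]) = hist_prob f \<tau> * f h \<tau> ob" using hist_prob_snoc[OF l h(1)] .
  show ?thesis
  proof (cases "hist_prob f \<tau> > 0")
    case True
    show ?thesis
    proof (cases "f h \<tau> ob > 0")
      case True2: True
      then have "hist_prob f (\<tau> @ [(ob, a)]) > 0" using hs True by simp
      then show ?thesis using True unfolding test_prob_def prodeq by simp
    next
      case False
      then have "f h \<tau> ob = 0" using fp by simp
      then show ?thesis using True unfolding test_prob_def prodeq by simp
    qed
  next
    case False
    then have "hist_prob f \<tau> = 0" using hp by simp
    then show ?thesis using hs unfolding test_prob_def by simp
  qed
qed

lemma tp_nonneg:
  assumes vm: "valid_model H f" and h: "1 \<le> h" and l: "length \<tau> = h - 1" and t: "is_test H h t"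
  shows "0 \<le> test_prob f h \<tau> t"
proof -
  have "0 \<le> f (h + k) (\<tau> @ zip (take k (fst t)) (take k (snd t))) (fst t ! k)" if "k < length (fst t)" for k
    using that t h l by (intro f_nonneg[OF vm]) (auto simp: is_test_def)
  then show ?thesis unfolding test_prob_def by (auto intro!: prod_nonneg)
qed

definition Pf :: "('ob, 'a) model \<Rightarrow> nat \<Rightarrow> ('ob, 'a) hist \<Rightarrow> ('ob, 'a) hist \<Rightarrow> real" where
  "Pf f h \<tau> seg = (\<Prod>k<length seg. f (h + k) (\<tau> @ take k seg) (fst (seg ! k)))"

lemma Pf_Nil[simp]: "Pf f h \<tau> [] = 1" by (simp add: Pf_def)

lemma Pf_Cons: "Pf f h \<tau> ((ob, a) # rest) = f h \<tau> ob * Pf f (Suc h) (\<tau> @ [(ob, a)]) rest"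
  unfolding Pf_def by (simp add: prod.lessThan_Suc_shift del: prod.lessThan_Suc)

lemma pol_Cons: "pol_prob \<pi> h \<tau> ((ob, a) # rest) = \<pi> h \<tau> ob a * pol_prob \<pi> (Suc h) (\<tau> @ [(ob, a)]) rest"
  unfolding pol_prob_def by (simp add: prod.lessThan_Suc_shift del: prod.lessThan_Suc)

lemma Pf_nonneg:
  assumes vm: "valid_model H f" and "1 \<le> h" "h + length seg \<le> Suc H" "length \<tau> = h - 1"
  shows "0 \<le> Pf f h \<tau> seg"
  unfolding Pf_def using assms by (auto intro!: prod_nonneg f_nonneg[OF vm])

lemma pol_nonneg:
  assumes vp: "valid_policy H \<pi>" and "1 \<le> h" "h + length seg \<le> Suc H" "length \<tau> = h - 1"
  shows "0 \<le> pol_prob \<pi> h \<tau> seg"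
  unfolding pol_prob_def using assms unfolding valid_policy_def by (auto intro!: prod_nonneg)

lemma M_apply_pred:
  fixes f :: "('ob::finite, 'a::finite) model"
  assumes vm: "valid_model H f" and cts: "core_test_sets H f U"
    and h: "1 \<le> h" "Suc h \<le> H" and l: "length \<tau> = h - 1"
  shows "M_apply f U ob a h (pred_state f U h \<tau>) = (\<lambda>u. f h \<tau> ob * pred_state f U (Suc h) (\<tau> @ [(ob, a)]) u)"
proof (rule ext)
  fix u
  show "M_apply f U ob a h (pred_state f U h \<tau>) u = f h \<tau> ob * pred_state f U (Suc h) (\<tau> @ [(ob, a)]) u"
  proof (cases "u \<in> U (Suc h)")
    case False then show ?thesis by (simp add: M_apply_def pred_state_def)
  next
    case True
    have c1: "finite (U h) \<and> (\<forall>t. is_test H h t \<longrightarrow> (\<exists>m. \<forall>\<tau>. length \<tau> = h - 1 \<longrightarrow>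
        test_prob f h \<tau> t = (\<Sum>u\<in>U h. m u * test_prob f h \<tau> u)))"
      using cts h unfolding core_test_sets_def by auto
    have "is_test H (Suc h) u" using cts h True unfolding core_test_sets_def by auto
    then have t: "is_test H h (ob # fst u, a # snd u)" by (auto simp: is_test_def)
    have "M_apply f U ob a h (pred_state f U h \<tau>) u = test_prob f h \<tau> (ob # fst u, a # snd u)"
      using m_vec_prop[of U h f "(ob # fst u, a # snd u)"] c1 t l True by (simp add: M_apply_def)
    also have "\<dots> = f h \<tau> ob * test_prob f (Suc h) (\<tau> @ [(ob, a)]) u"
      using tp_cons[OF vm h(1) _ l, of ob "fst u" a "snd u"] h by simp
    finally show ?thesis using True by (simp add: pred_state_def)
  qed
qed



lemma M_apply_lin:
  "M_apply f U ob a h (\<lambda>v. \<Sum>i\<in>I. z i * w i v) = (\<lambda>u. \<Sum>i\<in>I. z i * M_apply f U ob a h (w i) u)"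
proof (rule ext)
  fix u
  show "M_apply f U ob a h (\<lambda>v. \<Sum>i\<in>I. z i * w i v) u = (\<Sum>i\<in>I. z i * M_apply f U ob a h (w i) u)"
  proof (cases "u \<in> U (Suc h)")
    case True
    have "(\<Sum>v\<in>U h. m_vec f U h (ob # fst u, a # snd u) v * (\<Sum>i\<in>I. z i * w i v))
        = (\<Sum>i\<in>I. z i * (\<Sum>v\<in>U h. m_vec f U h (ob # fst u, a # snd u) v * w i v))"
      by (simp add: sum_distrib_left sum_distrib_right mult_ac) (rule sum.swap)
    then show ?thesis using True by (simp add: M_apply_def)
  qed (simp add: M_apply_def)
qed

lemma M_prod_lin:
  "M_prod f U h seg (\<lambda>v. \<Sum>i\<in>I. z i * w i v) = (\<lambda>u. \<Sum>i\<in>I. z i * M_prod f U h seg (w i) u)"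
proof (induction seg arbitrary: h w)
  case Nil
  then show ?case by simp
next
  case (Cons p rest)
  obtain ob a where p: "p = (ob, a)" by (cases p)
  show ?case using Cons.IH[of "Suc h" "\<lambda>i. M_apply f U ob a h (w i)"]
    by (simp add: p M_apply_lin)
qed

lemma M_prod_scale:
  "M_prod f U h seg (\<lambda>v. c * w v) = (\<lambda>u. c * M_prod f U h seg w u)"
  using M_prod_lin[where f=f and U=U and h=h and seg=seg and I="{()}" and z="\<lambda>_. c" and w="\<lambda>_. w"] by simp

lemma M_prod_pred:
  fixes f :: "('ob::finite, 'a::finite) model"
  assumes vm: "valid_model H f" and cts: "core_test_sets H f U"
  shows "1 \<le> h \<Longrightarrow> h + length seg \<le> H \<Longrightarrow> length \<tau> = h - 1 \<Longrightarrow>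
    M_prod f U h seg (pred_state f U h \<tau>) = (\<lambda>u. Pf f h \<tau> seg * pred_state f U (h + length seg) (\<tau> @ seg) u)"
proof (induction seg arbitrary: h \<tau>)
  case Nil
  then show ?case by simp
next
  case (Cons p rest)
  obtain ob a where p: "p = (ob, a)" by (cases p)
  have "M_prod f U h (p # rest) (pred_state f U h \<tau>)
      = M_prod f U (Suc h) rest (\<lambda>u. f h \<tau> ob * pred_state f U (Suc h) (\<tau> @ [(ob, a)]) u)"
    using M_apply_pred[OF vm cts Cons.prems(1) _ Cons.prems(3), of ob a] Cons.prems(2) by (simp add: p)
  also have "\<dots> = (\<lambda>u. f h \<tau> ob * M_prod f U (Suc h) rest (pred_state f U (Suc h) (\<tau> @ [(ob, a)])) u)"
    by (rule M_prod_scale)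
  also have "\<dots> = (\<lambda>u. f h \<tau> ob * (Pf f (Suc h) (\<tau> @ [(ob, a)]) rest * pred_state f U (Suc h + length rest) ((\<tau> @ [(ob, a)]) @ rest) u))"
    using Cons.IH[of "Suc h" "\<tau> @ [(ob, a)]"] Cons.prems by simp
  finally show ?case by (simp add: p Pf_Cons mult.assoc)
qed



lemma sum_len_Suc:
  fixes g :: "('x::finite) list \<Rightarrow> real"
  shows "(\<Sum>l\<in>{l. length l = Suc n}. g l) = (\<Sum>x\<in>UNIV. \<Sum>l\<in>{l. length l = n}. g (x # l))"
proof -
  have eq: "{l. length l = Suc n} = (\<lambda>(x, l). x # l) ` (UNIV \<times> {l. length l = n})"
    by (auto simp: image_iff length_Suc_conv)
  have inj: "inj_on (\<lambda>(x, l). x # l) (UNIV \<times> {l :: 'x list. length l = n})"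
    by (auto simp: inj_on_def)
  show ?thesis
    unfolding eq sum.reindex[OF inj] by (simp add: sum.cartesian_product split_def)
qed

lemma sum_len_0: "(\<Sum>l\<in>{l. length l = 0}. g l) = g []"
proof -
  have "{l. length l = 0} = {[]}" by auto
  then show ?thesis by simp
qed

lemma sum_pairs:
  fixes g :: "('x::finite \<times> 'y::finite) \<Rightarrow> real"
  shows "(\<Sum>p\<in>UNIV. g p) = (\<Sum>x\<in>UNIV. \<Sum>y\<in>UNIV. g (x, y))"
  by (simp add: sum.cartesian_product UNIV_Times_UNIV[symmetric] del: UNIV_Times_UNIV)

lemma seg_bound:
  fixes f :: "('ob::finite, 'a::finite) model"
  assumes vm: "valid_model H f" and vp: "valid_policy H \<pi>"
  shows "1 \<le> h \<Longrightarrow> h + n \<le> Suc H \<Longrightarrow> length \<tau> = h - 1 \<Longrightarrow> length \<tau>' = h - 1 \<Longrightarrow>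
    (\<forall>\<tau>''. length \<tau>'' = h - 1 + n \<longrightarrow> 0 \<le> g \<tau>'' \<and> g \<tau>'' \<le> B) \<Longrightarrow>
    0 \<le> (\<Sum>seg\<in>{seg. length seg = n}. Pf f h \<tau>' seg * pol_prob \<pi> h \<tau> seg * g (\<tau>' @ seg)) \<and>
    (\<Sum>seg\<in>{seg. length seg = n}. Pf f h \<tau>' seg * pol_prob \<pi> h \<tau> seg * g (\<tau>' @ seg)) \<le> B"
proof (induction n arbitrary: h \<tau> \<tau>')
  case 0
  then show ?case by (simp add: sum_len_0 pol_prob_def)
next
  case (Suc n)
  define S' where "S' = (\<lambda>ob a. \<Sum>rest\<in>{seg. length seg = n}. Pf f (Suc h) (\<tau>' @ [(ob, a)]) rest *
       pol_prob \<pi> (Suc h) (\<tau> @ [(ob, a)]) rest * g ((\<tau>' @ [(ob, a)]) @ rest))"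
  have IH: "0 \<le> S' ob a \<and> S' ob a \<le> B" for ob a
    unfolding S'_def using Suc.prems by (intro Suc.IH) auto
  have hH: "h \<le> H" using Suc.prems by simp
  have fnn: "0 \<le> f h \<tau>' ob" for ob using f_nonneg[OF vm Suc.prems(1) hH Suc.prems(4)] .
  have fsum: "(\<Sum>ob\<in>UNIV. f h \<tau>' ob) = 1" using vm Suc.prems hH unfolding valid_model_def by auto
  have pnn: "0 \<le> \<pi> h \<tau> ob a" for ob a using vp Suc.prems hH unfolding valid_policy_def by auto
  have psum: "(\<Sum>a\<in>UNIV. \<pi> h \<tau> ob a) = 1" for ob using vp Suc.prems hH unfolding valid_policy_def by auto
  have Seq: "(\<Sum>seg\<in>{seg. length seg = Suc n}. Pf f h \<tau>' seg * pol_prob \<pi> h \<tau> seg * g (\<tau>' @ seg))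
     = (\<Sum>ob\<in>UNIV. \<Sum>a\<in>UNIV. f h \<tau>' ob * \<pi> h \<tau> ob a * S' ob a)"
    unfolding sum_len_Suc sum_pairs S'_def
    by (simp add: Pf_Cons pol_Cons sum_distrib_left mult_ac)
  have lo: "0 \<le> (\<Sum>ob\<in>UNIV. \<Sum>a\<in>UNIV. f h \<tau>' ob * \<pi> h \<tau> ob a * S' ob a)"
    using IH fnn pnn by (intro sum_nonneg mult_nonneg_nonneg) auto
  have "(\<Sum>ob\<in>UNIV. \<Sum>a\<in>UNIV. f h \<tau>' ob * \<pi> h \<tau> ob a * S' ob a) \<le> (\<Sum>ob\<in>UNIV. \<Sum>a\<in>UNIV. f h \<tau>' ob * \<pi> h \<tau> ob a * B)"
    using IH fnn pnn by (intro sum_mono mult_left_mono) auto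
  also have "\<dots> = (\<Sum>ob\<in>UNIV. f h \<tau>' ob * (\<Sum>a\<in>UNIV. \<pi> h \<tau> ob a) * B)"
    by (simp add: sum_distrib_left sum_distrib_right mult_ac)
  also have "\<dots> = B" using psum fsum by (simp add: sum_distrib_right[symmetric])
  finally show ?case using lo Seq by simp
qed

lemma obs_sum:
  fixes f :: "('ob::finite, 'a::finite) model"
  assumes vm: "valid_model H f"
  shows "1 \<le> h \<Longrightarrow> h + n \<le> Suc H \<Longrightarrow> length \<tau> = h - 1 \<Longrightarrow> n \<le> Suc (length as) \<Longrightarrow>
    (\<Sum>os\<in>{os. length os = n}. \<Prod>k<n. f (h + k) (\<tau> @ zip (take k os) (take k as)) (os ! k)) = 1"
proof (induction n arbitrary: h \<tau> as)
  case 0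
  then show ?case by (simp add: sum_len_0)
next
  case (Suc n)
  have hH: "h \<le> H" using Suc.prems by simp
  have fsum: "(\<Sum>ob\<in>UNIV. f h \<tau> ob) = 1" using vm Suc.prems hH unfolding valid_model_def by auto
  show ?case
  proof (cases as)
    case Nil
    then have "n = 0" using Suc.prems by simp
    then show ?thesis using fsum by (simp add: sum_len_Suc sum_len_0)
  next
    case (Cons a as')
    have IH: "(\<Sum>os\<in>{os. length os = n}. \<Prod>k<n. f (Suc h + k) ((\<tau> @ [(ob, a)]) @ zip (take k os) (take k as')) (os ! k)) = 1" for ob
      using Suc.prems Cons by (intro Suc.IH) auto
    have "(\<Sum>os\<in>{os. length os = Suc n}. \<Prod>k<Suc n. f (h + k) (\<tau> @ zip (take k os) (take k as)) (os ! k))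
       = (\<Sum>ob\<in>UNIV. f h \<tau> ob * (\<Sum>os\<in>{os. length os = n}. \<Prod>k<n. f (Suc h + k) ((\<tau> @ [(ob, a)]) @ zip (take k os) (take k as')) (os ! k)))"
      unfolding sum_len_Suc
      by (simp add: Cons prod.lessThan_Suc_shift sum_distrib_left del: prod.lessThan_Suc)
    also have "\<dots> = 1" using IH fsum by simp
    finally show ?thesis .
  qed
qed



lemma tp_sum_le1:
  fixes f :: "('ob::finite, 'a::finite) model"
  assumes vm: "valid_model H f" and h: "1 \<le> h" "h + Suc (length as) \<le> Suc H" and l: "length \<tau> = h - 1"
  shows "(\<Sum>os\<in>{os. length os = Suc (length as)}. test_prob f h \<tau> (os, as)) \<le> 1"
proof (cases "hist_prob f \<tau> > 0")
  case True
  have "(\<Sum>os\<in>{os. length os = Suc (length as)}. test_prob f h \<tau> (os, as))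
     = (\<Sum>os\<in>{os. length os = Suc (length as)}. \<Prod>k<Suc (length as). f (h + k) (\<tau> @ zip (take k os) (take k as)) (os ! k))"
    using True by (intro sum.cong) (auto simp: test_prob_def)
  also have "\<dots> = 1" by (rule obs_sum[OF vm h l]) simp
  finally show ?thesis by simp
next
  case False
  then show ?thesis by (simp add: test_prob_def)
qed

lemma l1_pred_bound:
  fixes f :: "('ob::finite, 'a::finite) model"
  assumes vm: "valid_model H f" and cts: "core_test_sets H f U"
    and h: "1 \<le> h" "h \<le> H" and l: "length \<tau> = h - 1"
  shows "l1norm (U h) (pred_state f U h \<tau>) \<le> card (snd ` U h)"
proof -
  have fin: "finite (U h)" and tests: "\<forall>u\<in>U h. is_test H h u"
    using cts h unfolding core_test_sets_def by auto
  have nn: "0 \<le> test_prob f h \<tau> u" if "u \<in> U h" for u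
    using tp_nonneg[OF vm h(1) l] tests that by blast
  have "l1norm (U h) (pred_state f U h \<tau>) = (\<Sum>u\<in>U h. test_prob f h \<tau> u)"
    unfolding l1norm_def pred_state_def using nn by (intro sum.cong) auto
  also have "\<dots> = (\<Sum>as\<in>snd ` U h. \<Sum>u\<in>{u\<in>U h. snd u = as}. test_prob f h \<tau> u)"
    by (rule sum.image_gen[OF fin])
  also have "\<dots> \<le> (\<Sum>as\<in>snd ` U h. 1)"
  proof (rule sum_mono)
    fix as assume as: "as \<in> snd ` U h"
    then obtain u0 where u0: "u0 \<in> U h" "snd u0 = as" by auto
    have hb: "h + Suc (length as) \<le> Suc H" using tests u0 by (auto simp: is_test_def)
    have inj: "inj_on fst {u\<in>U h. snd u = as}" by (auto simp: inj_on_def prod_eq_iff)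
    have "(\<Sum>u\<in>{u\<in>U h. snd u = as}. test_prob f h \<tau> u) = (\<Sum>os\<in>fst ` {u\<in>U h. snd u = as}. test_prob f h \<tau> (os, as))"
      by (subst sum.reindex[OF inj]) (auto intro!: sum.cong)
    also have "\<dots> \<le> (\<Sum>os\<in>{os. length os = Suc (length as)}. test_prob f h \<tau> (os, as))"
    proof (rule sum_mono2)
      show "finite {os :: 'ob list. length os = Suc (length as)}"
        using finite_lists_length_eq[of "UNIV :: 'ob set"] by simp
      show "fst ` {u \<in> U h. snd u = as} \<subseteq> {os. length os = Suc (length as)}"
        using tests by (auto simp: is_test_def)
      show "0 \<le> test_prob f h \<tau> (os, as)" if "os \<in> {os. length os = Suc (length as)} - fst ` {u \<in> U h. snd u = as}" for os
        using that hb by (intro tp_nonneg[OF vm h(1) l]) (auto simp: is_test_def)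
    qed
    also have "\<dots> \<le> 1" by (rule tp_sum_le1[OF vm h(1) hb l])
    finally show "(\<Sum>u\<in>{u\<in>U h. snd u = as}. test_prob f h \<tau> u) \<le> 1" .
  qed
  also have "\<dots> = card (snd ` U h)" by simp
  finally show ?thesis .
qed

lemma UA_bound:
  assumes "1 \<le> h" "h \<le> H"
  shows "card (snd ` U h) \<le> UA_card H U"
  unfolding UA_card_def using assms by (intro Max_ge) auto



lemma l1norm_nonneg: "0 \<le> l1norm S v"
  unfolding l1norm_def by (simp add: sum_nonneg)

theorem lemma10:
  fixes F :: "('ob::finite, 'a::finite) model set"
    and U :: "nat \<Rightarrow> ('ob, 'a) test set"
    and H :: nat and \<alpha> :: real
    and f :: "('ob, 'a) model" and \<pi> :: "('ob, 'a) policy"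
    and \<tau> :: "('ob, 'a) hist" and x :: "('ob, 'a) test \<Rightarrow> real"
    and j1 j2 :: nat
  assumes alpha_pos: "0 < \<alpha>"
    and model_class: "\<forall>g\<in>F. valid_model H g \<and> core_test_sets H g U \<and> (\<forall>h<H. core_bound H g U \<alpha> h)"
    and obs_in_UH: "\<forall>ob. ([ob], []) \<in> U H"
    and f_in: "f \<in> F"
    and pol: "valid_policy H \<pi>"
    and j: "1 \<le> j1" "j1 \<le> j2" "j2 \<le> H - 1"
    and tau: "length \<tau> = j1 - 1"
  shows "(\<Sum>seg\<in>{seg. length seg = j2 - j1 + 1}.
            l1norm (U (Suc j2)) (M_prod f U j1 seg x) * pol_prob \<pi> j1 \<tau> seg)
         \<le> real (UA_card H U) / \<alpha> * l1norm (U j1) x"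
proof -
  have vm: "valid_model H f" and cts: "core_test_sets H f U" and cb: "\<And>h. h < H \<Longrightarrow> core_bound H f U \<alpha> h"
    using model_class f_in by auto
  have j1H: "Suc j1 \<le> H" and j2H: "Suc j2 \<le> H" using j by auto
  obtain hs where HS1: "\<forall>t\<in>set hs. length t = j1 - 1"
    and HS2: "\<forall>t. length t = j1 - 1 \<longrightarrow> pred_state f U j1 t \<in> fspan (pred_state f U j1 ` set hs)"
    and HS3: "opnorm11_le (U j1) {..<length hs} (pinv (U j1) {..<length hs} (core_mat f U (j1 - 1) hs)) (1 / \<alpha>)"
  proof (cases "j1 = 1")
    case True
    interpret V: vector_space "fscale :: real \<Rightarrow> (('ob, 'a) test \<Rightarrow> real) \<Rightarrow> (('ob, 'a) test \<Rightarrow> real)"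
      by (rule vector_space_fscale)
    have "core_bound H f U \<alpha> 0" using cb j1H by simp
    then have "opnorm11_le (U 1) {..<1} (pinv (U 1) {..<1} (core_mat f U 0 [[]])) (1 / \<alpha>)"
      by (simp add: core_bound_def)
    moreover have "\<forall>t. length t = j1 - 1 \<longrightarrow> pred_state f U j1 t \<in> fspan (pred_state f U j1 ` set [[]])"
      using True by (auto intro: V.span_base)
    ultimately show ?thesis using True by (intro that[of "[[]]"]) auto
  next
    case False
    then have "j1 - 1 \<noteq> 0" "j1 - 1 < H" using j j1H by auto
    then have cbj: "core_bound H f U \<alpha> (j1 - 1)" and sj: "Suc (j1 - 1) = j1" using cb j by auto
    obtain hs where H2: "\<forall>t\<in>set hs. length t = j1 - 1"
      and H3: "\<forall>t. length t = j1 - 1 \<longrightarrow> pred_state f U (Suc (j1 - 1)) t \<in> fspan (pred_state f U (Suc (j1 - 1)) ` set hs)"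
      and H4: "opnorm11_le (U (Suc (j1 - 1))) {..<length hs}
           (pinv (U (Suc (j1 - 1))) {..<length hs} (core_mat f U (j1 - 1) hs)) (1 / \<alpha>)"
      using cbj unfolding core_bound_def if_not_P[OF \<open>j1 - 1 \<noteq> 0\<close>] by blast
    show ?thesis
    proof (rule that[of hs])
      show "\<forall>t\<in>set hs. length t = j1 - 1" by (rule H2)
      show "\<forall>t. length t = j1 - 1 \<longrightarrow> pred_state f U j1 t \<in> fspan (pred_state f U j1 ` set hs)"
        using H3 unfolding sj .
      show "opnorm11_le (U j1) {..<length hs} (pinv (U j1) {..<length hs} (core_mat f U (j1 - 1) hs)) (1 / \<alpha>)"
        using H4 unfolding sj .
    qed
  qed
  define R where "R = U j1"
  define n where "n = length hs"
  define C where "C = {..<n}"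
  define K where "K = core_mat f U (j1 - 1) hs"
  define X where "X = pinv R C K"
  define z where "z = (\<lambda>i. \<Sum>v\<in>R. X i v * x v)"
  define Kz where "Kz = (\<lambda>v. \<Sum>i\<in>C. z i * pred_state f U j1 (hs ! i) v)"
  have finR: "finite R" using cts j j1H unfolding core_test_sets_def R_def by auto
  have finC: "finite C" by (simp add: C_def)
  have Kdef: "K u i = pred_state f U j1 (hs ! i) u" for u i
    using j by (simp add: K_def core_mat_def)
  have bz: "l1norm C z \<le> (1 / \<alpha>) * l1norm R x"
    using HS3 unfolding opnorm11_le_def z_def X_def R_def C_def n_def K_def by blast
  have orthK: "(\<Sum>r\<in>R. (x r - Kz r) * w r) = 0" if w_in: "w \<in> pred_state f U j1 ` set hs" for w
  proof -
    obtain i where i: "i < n" "w = pred_state f U j1 (hs ! i)"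
      using w_in by (auto simp: in_set_conv_nth n_def)
    have wK: "w r = K r i" for r using i Kdef by simp
    have iC: "i \<in> C" using i by (simp add: C_def)
    have "(\<Sum>r\<in>R. K r i * Kz r) = (\<Sum>r\<in>R. K r i * (\<Sum>i'\<in>C. K r i' * (\<Sum>s\<in>R. X i' s * x s)))"
      by (simp add: Kz_def z_def Kdef mult_ac)
    also have "\<dots> = (\<Sum>r\<in>R. K r i * (\<Sum>s\<in>R. (\<Sum>i'\<in>C. K r i' * X i' s) * x s))"
      by (simp add: swap3)
    also have "\<dots> = (\<Sum>s\<in>R. (\<Sum>r\<in>R. K r i * (\<Sum>i'\<in>C. K r i' * X i' s)) * x s)"
      by (rule swap3)
    also have "\<dots> = (\<Sum>s\<in>R. K s i * x s)"
      using pinv_KtKX[OF finR finC iC] by (simp add: X_def)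
    finally have "(\<Sum>r\<in>R. K r i * Kz r) = (\<Sum>s\<in>R. K s i * x s)" .
    then show ?thesis
      by (simp add: wK algebra_simps sum_subtractf)
  qed
  have key: "(\<Sum>v\<in>R. m v * x v) = (\<Sum>v\<in>R. m v * Kz v)"
    if "m \<in> fspan {pred_state f U j1 t | t. length t = j1 - 1}" for m
  proof -
    have "m \<in> fspan (pred_state f U j1 ` set hs)"
      using fspan_sub[OF that] HS2 by blast
    then have "(\<Sum>r\<in>R. (x r - Kz r) * m r) = 0"
      by (rule fspan_orth) (use orthK in blast)
    then show ?thesis by (simp add: algebra_simps sum_subtractf)
  qed
  have Mx: "M_apply f U ob a j1 x = M_apply f U ob a j1 Kz" for ob a
  proof (rule ext)
    fix u
    show "M_apply f U ob a j1 x u = M_apply f U ob a j1 Kz u"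
    proof (cases "u \<in> U (Suc j1)")
      case True
      have c1: "finite (U j1) \<and> (\<forall>t. is_test H j1 t \<longrightarrow> (\<exists>m. \<forall>\<tau>. length \<tau> = j1 - 1 \<longrightarrow>
          test_prob f j1 \<tau> t = (\<Sum>u\<in>U j1. m u * test_prob f j1 \<tau> u)))"
        using cts j j1H unfolding core_test_sets_def by auto
      have "is_test H (Suc j1) u" using cts j1H True unfolding core_test_sets_def by auto
      then have t: "is_test H j1 (ob # fst u, a # snd u)" by (auto simp: is_test_def)
      have "m_vec f U j1 (ob # fst u, a # snd u) \<in> fspan {pred_state f U j1 t | t. length t = j1 - 1}"
        using m_vec_prop[of U j1 f "(ob # fst u, a # snd u)"] c1 t by blast
      from key[OF this] show ?thesis using True by (simp add: M_apply_def R_def)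
    qed (simp add: M_apply_def)
  qed
  define N where "N = j2 - j1 + 1"
  have jN: "j1 + N = Suc j2" using j by (simp add: N_def)
  define Q where "Q = (\<lambda>i seg. Pf f j1 (hs ! i) seg)"
  define g where "g = (\<lambda>t. l1norm (U (Suc j2)) (pred_state f U (Suc j2) t))"
  have hsl: "length (hs ! i) = j1 - 1" if "i \<in> C" for i
    using HS1 that by (simp add: C_def n_def)
  have Qnn: "0 \<le> Q i seg" if "i \<in> C" "length seg = N" for i seg
    unfolding Q_def using that jN j2H by (intro Pf_nonneg[OF vm j(1)]) (auto simp: hsl)
  have Mseg: "l1norm (U (Suc j2)) (M_prod f U j1 seg x) \<le> (\<Sum>i\<in>C. \<bar>z i\<bar> * (Q i seg * g (hs ! i @ seg)))"
    if "length seg = N" for seg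
  proof -
    have "seg \<noteq> []" using that by (auto simp: N_def)
    then obtain ob a rest where seg: "seg = (ob, a) # rest"
      by (metis list.exhaust prod.exhaust)
    have "M_prod f U j1 seg x = M_prod f U j1 seg Kz"
      using Mx by (simp add: seg)
    also have "\<dots> = (\<lambda>u. \<Sum>i\<in>C. z i * M_prod f U j1 seg (pred_state f U j1 (hs ! i)) u)"
      unfolding Kz_def by (rule M_prod_lin)
    also have "\<dots> = (\<lambda>u. \<Sum>i\<in>C. z i * (Q i seg * pred_state f U (Suc j2) (hs ! i @ seg) u))"
    proof (rule ext, rule sum.cong[OF refl])
      fix u i assume i: "i \<in> C"
      have "M_prod f U j1 seg (pred_state f U j1 (hs ! i)) = (\<lambda>u. Pf f j1 (hs ! i) seg * pred_state f U (j1 + length seg) (hs ! i @ seg) u)"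
        using that jN j2H hsl[OF i] by (intro M_prod_pred[OF vm cts j(1)]) auto
      then show "z i * M_prod f U j1 seg (pred_state f U j1 (hs ! i)) u = z i * (Q i seg * pred_state f U (Suc j2) (hs ! i @ seg) u)"
        using that jN by (simp add: Q_def)
    qed
    finally have eq: "M_prod f U j1 seg x = (\<lambda>u. \<Sum>i\<in>C. z i * (Q i seg * pred_state f U (Suc j2) (hs ! i @ seg) u))" .
    have "l1norm (U (Suc j2)) (M_prod f U j1 seg x) = (\<Sum>u\<in>U (Suc j2). \<bar>\<Sum>i\<in>C. z i * (Q i seg * pred_state f U (Suc j2) (hs ! i @ seg) u)\<bar>)"
      by (simp add: eq l1norm_def)
    also have "\<dots> \<le> (\<Sum>u\<in>U (Suc j2). \<Sum>i\<in>C. \<bar>z i\<bar> * (Q i seg * \<bar>pred_state f U (Suc j2) (hs ! i @ seg) u\<bar>))"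
    proof (rule sum_mono)
      fix u
      have "\<bar>\<Sum>i\<in>C. z i * (Q i seg * pred_state f U (Suc j2) (hs ! i @ seg) u)\<bar>
          \<le> (\<Sum>i\<in>C. \<bar>z i * (Q i seg * pred_state f U (Suc j2) (hs ! i @ seg) u)\<bar>)"
        by (rule sum_abs)
      also have "\<dots> = (\<Sum>i\<in>C. \<bar>z i\<bar> * (Q i seg * \<bar>pred_state f U (Suc j2) (hs ! i @ seg) u\<bar>))"
        using Qnn that by (intro sum.cong) (auto simp: abs_mult)
      finally show "\<bar>\<Sum>i\<in>C. z i * (Q i seg * pred_state f U (Suc j2) (hs ! i @ seg) u)\<bar>
          \<le> (\<Sum>i\<in>C. \<bar>z i\<bar> * (Q i seg * \<bar>pred_state f U (Suc j2) (hs ! i @ seg) u\<bar>))" .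
    qed
    also have "\<dots> = (\<Sum>i\<in>C. \<bar>z i\<bar> * (Q i seg * g (hs ! i @ seg)))"
      by (subst sum.swap) (simp add: g_def l1norm_def sum_distrib_left)
    finally show ?thesis .
  qed
  define UA where "UA = real (UA_card H U)"
  have UAnn: "0 \<le> UA" by (simp add: UA_def)
  have segb: "(\<Sum>seg\<in>{seg. length seg = N}. Q i seg * pol_prob \<pi> j1 \<tau> seg * g (hs ! i @ seg)) \<le> UA"
    if i: "i \<in> C" for i
  proof -
    have gb: "\<forall>t. length t = j1 - 1 + N \<longrightarrow> 0 \<le> g t \<and> g t \<le> UA"
    proof (intro allI impI conjI)
      fix t :: "('ob, 'a) hist" assume lt: "length t = j1 - 1 + N"
      show "0 \<le> g t" by (simp add: g_def l1norm_nonneg)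
      have "g t \<le> card (snd ` U (Suc j2))"
        unfolding g_def using lt jN j j2H by (intro l1_pred_bound[OF vm cts]) auto
      also have "\<dots> \<le> UA" unfolding UA_def using UA_bound[of "Suc j2" H U] j2H by simp
      finally show "g t \<le> UA" .
    qed
    show ?thesis
      using seg_bound[OF vm pol j(1) _ tau hsl[OF i] gb] jN j2H by (simp add: Q_def)
  qed
  have polnn: "0 \<le> pol_prob \<pi> j1 \<tau> seg" if "length seg = N" for seg
    using that jN j2H by (intro pol_nonneg[OF pol j(1) _ tau]) auto
  have finS: "finite {seg :: ('ob, 'a) hist. length seg = N}" by (rule fin_hist)
  have "(\<Sum>seg\<in>{seg. length seg = N}. l1norm (U (Suc j2)) (M_prod f U j1 seg x) * pol_prob \<pi> j1 \<tau> seg)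
      \<le> (\<Sum>seg\<in>{seg. length seg = N}. (\<Sum>i\<in>C. \<bar>z i\<bar> * (Q i seg * g (hs ! i @ seg))) * pol_prob \<pi> j1 \<tau> seg)"
    using Mseg polnn by (intro sum_mono mult_right_mono) auto
  also have "\<dots> = (\<Sum>i\<in>C. \<bar>z i\<bar> * (\<Sum>seg\<in>{seg. length seg = N}. Q i seg * pol_prob \<pi> j1 \<tau> seg * g (hs ! i @ seg)))"
  proof -
    have "(\<Sum>seg\<in>{seg. length seg = N}. (\<Sum>i\<in>C. \<bar>z i\<bar> * (Q i seg * g (hs ! i @ seg))) * pol_prob \<pi> j1 \<tau> seg)
      = (\<Sum>seg\<in>{seg. length seg = N}. \<Sum>i\<in>C. \<bar>z i\<bar> * (Q i seg * pol_prob \<pi> j1 \<tau> seg * g (hs ! i @ seg)))"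
      by (intro sum.cong refl) (simp add: sum_distrib_right sum_distrib_left mult_ac)
    also have "\<dots> = (\<Sum>i\<in>C. \<Sum>seg\<in>{seg. length seg = N}. \<bar>z i\<bar> * (Q i seg * pol_prob \<pi> j1 \<tau> seg * g (hs ! i @ seg)))"
      by (rule sum.swap)
    also have "\<dots> = (\<Sum>i\<in>C. \<bar>z i\<bar> * (\<Sum>seg\<in>{seg. length seg = N}. Q i seg * pol_prob \<pi> j1 \<tau> seg * g (hs ! i @ seg)))"
      by (simp add: sum_distrib_left)
    finally show ?thesis .
  qed
  also have "\<dots> \<le> (\<Sum>i\<in>C. \<bar>z i\<bar> * UA)"
    using segb by (intro sum_mono mult_left_mono) auto
  also have "\<dots> = UA * l1norm C z" by (simp add: l1norm_def sum_distrib_left mult_ac)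
  also have "\<dots> \<le> UA * ((1 / \<alpha>) * l1norm R x)" using bz UAnn by (rule mult_left_mono)
  also have "\<dots> = real (UA_card H U) / \<alpha> * l1norm (U j1) x" by (simp add: UA_def R_def)
  finally show ?thesis by (simp add: N_def)
qed


end
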